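(* Let $p\in\mathbb{R}$. Every $z=(v,m,\sigma,e)\in Z$ satisfying $m\ne(e+p)v$, $2e-|v|^2>0$ and $M(z)=0$ belongs to $K^{\Lambda,1}$.
   Context: $\mathcal S_0^{2\times2}$ is the space of traceless symmetric $2\times2$ matrices, $Z:=\mathbb{R}^2\times\mathbb{R}^2\times\mathcal S_0^{2\times2}\times\mathbb{R}$, $K:=\{z\in Z: v\otimes v-\sigma=e\,\mathrm{Id},\ m=(e+p)v\}$. The wave cone is $\Lambda=\{\bar z=(\bar v,\bar m,\bar\sigma,\bar e)\in Z:\ (\bar v,\bar e)\neq0\text{ and there is }0\ne(\xi,c)\in\mathbb{R}^2\times\mathbb{R}\text{ with }(\bar\sigma+\bar e\,\mathrm{Id})\xi+c\bar v=0,\ \bar v\cdot\xi=0,\ \bar m\cdot\xi+c\bar e=0\}$. For a set $A\subset Z$, $A^{\Lambda,1}:=A\cup\{sz_1+(1-s)z_2: z_1,z_2\in A,\ s\in[0,1],\ z_1-z_2\in\Lambda\}$, and $K^{\Lambda,1}$ is this for $A=K$. For $z$ with $m\ne(e+p)v$ set $\eta(z):=\frac{m-(e+p)v}{|m-(e+p)v|}$ and $M(z):=v\otimes v-\sigma-e\,\mathrm{Id}+(2e-|v|^2)\eta(z)\otimes\eta(z)$. *)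

theory Defs
  imports "HOL-Analysis.Analysis"
begin

type_synonym zpt = "(real^2) \<times> (real^2) \<times> (real^2^2) \<times> real"

definition outer :: "real^2 \<Rightarrow> real^2 \<Rightarrow> real^2^2" where
  "outer u w = (\<chi> i j. u$i * w$j)"

definition Zset :: "zpt set" where
  "Zset = {(v,m,\<sigma>,e). transpose \<sigma> = \<sigma> \<and> trace \<sigma> = 0}"

definition Kset :: "real \<Rightarrow> zpt set" where
  "Kset p = {(v,m,\<sigma>,e) \<in> Zset. outer v v - \<sigma> = e *\<^sub>R mat 1 \<and> m = (e + p) *\<^sub>R v}"

definition wave_cone :: "zpt set" where
  "wave_cone = {(v,m,\<sigma>,e) \<in> Zset. (v,e) \<noteq> 0 \<and>
     (\<exists>(\<xi>::real^2) (c::real). (\<xi>,c) \<noteq> 0 \<and>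
        (\<sigma> + e *\<^sub>R mat 1) *v \<xi> + c *\<^sub>R v = 0 \<and> v \<bullet> \<xi> = 0 \<and> m \<bullet> \<xi> + c * e = 0)}"

definition lam1 :: "zpt set \<Rightarrow> zpt set" where
  "lam1 A = A \<union> {s *\<^sub>R z1 + (1 - s) *\<^sub>R z2 | s z1 z2.
      z1 \<in> A \<and> z2 \<in> A \<and> s \<in> {0..1} \<and> z1 - z2 \<in> wave_cone}"

definition eta :: "real \<Rightarrow> zpt \<Rightarrow> real^2" where
  "eta p z = (case z of (v,m,\<sigma>,e) \<Rightarrow> (1 / norm (m - (e + p) *\<^sub>R v)) *\<^sub>R (m - (e + p) *\<^sub>R v))"

definition Mmat :: "real \<Rightarrow> zpt \<Rightarrow> real^2^2" where
  "Mmat p z = (case z of (v,m,\<sigma>,e) \<Rightarrow>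
     outer v v - \<sigma> - e *\<^sub>R mat 1 + (2 * e - (norm v)\<^sup>2) *\<^sub>R outer (eta p z) (eta p z))"

end

theory Submission
  imports Defs
begin

lemma norm2_comp: "(norm (x::real^2))\<^sup>2 = (x$1)\<^sup>2 + (x$2)\<^sup>2"
  unfolding power2_norm_eq_inner by (simp add: inner_vec_def sum_2 power2_eq_square)

lemma vec2_eq: "((x::real^2) = y) \<longleftrightarrow> (x$1) = (y$1) \<and> (x$2) = (y$2)"
  by (simp add: vec_eq_iff forall_2)

lemma mat2_eq: "((A::real^2^2) = B) \<longleftrightarrow>
   A$1$1 = B$1$1 \<and> A$1$2 = B$1$2 \<and> A$2$1 = B$2$1 \<and> A$2$2 = B$2$2"
  by (simp add: vec_eq_iff forall_2)

lemma one_ne_two2: "(1::2) \<noteq> 2" by simp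

lemmas CS = outer_def mat_def sum_2 matrix_vector_mult_def inner_vec_def transpose_def trace_def

lemma inK:
  fixes x :: "real^2"
  assumes "ee = ((x$1)^2 + (x$2)^2) / 2"
  shows "(x, (ee + p) *\<^sub>R x, outer x x - ee *\<^sub>R mat 1, ee) \<in> Kset p"
proof -
  have t: "transpose (outer x x - ee *\<^sub>R mat 1) = outer x x - ee *\<^sub>R mat 1"
    by (simp add: mat2_eq CS)
  have tr: "trace (outer x x - ee *\<^sub>R mat 1) = 0"
    using assms by (simp add: CS power2_eq_square)
  show ?thesis unfolding Kset_def Zset_def using t tr by simp
qed

lemma comb_div: fixes a b L T1 T2 :: real
  assumes "a + b > 0" "b*T1 + a*T2 = (a+b)*L"
  shows "L = b/(a+b) * T1 + (1 - b/(a+b)) * T2"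
proof -
  have "1 - b/(a+b) = a/(a+b)" using assms(1) by (simp add: field_simps)
  then have "b/(a+b) * T1 + (1 - b/(a+b)) * T2 = b/(a+b) * T1 + a/(a+b) * T2" by simp
  also have "\<dots> = (b*T1 + a*T2)/(a+b)" by (simp add: add_divide_distrib)
  also have "\<dots> = L" using assms by simp
  finally show ?thesis by simp
qed
lemma alg_m: fixes a b V1 V2 h p w :: real
  assumes "a + b > 0"
  shows "((VV+a*b)/2 + p) * V1 + ((a-b)*a*b/2 + a*b*w) * h =
    b/(a+b) * (((VV+2*a*w+a^2)/2 + p)*(V1 + a*h)) + (1 - b/(a+b)) * (((VV-2*b*w+b^2)/2+p)*(V1 - b*h))"
  by (rule comb_div[OF assms]) (simp add: algebra_simps power2_eq_square add_divide_distrib diff_divide_distrib)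
lemma alg_s: fixes a b x y :: real
  assumes "a + b > 0"
  shows "x*y + (a*b)*h*k = b/(a+b) * ((x + a*h)*(y+a*k)) + (1 - b/(a+b)) * ((x - b*h)*(y-b*k))"
  by (rule comb_div[OF assms]) (simp add: algebra_simps power2_eq_square add_divide_distrib diff_divide_distrib)
lemma alg_v: fixes a b x h :: real
  assumes "a + b > 0"
  shows "x = b/(a+b) * (x + a*h) + (1 - b/(a+b)) * (x - b*h)"
  by (rule comb_div[OF assms]) (simp add: algebra_simps power2_eq_square add_divide_distrib diff_divide_distrib)
lemma alg_e: fixes a b VV w :: real
  assumes "a + b > 0"
  shows "(VV + a*b)/2 = b/(a+b) * ((VV+2*a*w+a^2)/2) + (1 - b/(a+b)) * ((VV-2*b*w+b^2)/2)"
  by (rule comb_div[OF assms]) (simp add: algebra_simps power2_eq_square add_divide_distrib diff_divide_distrib)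

theorem lemma2p6:
  fixes p e :: real and v m :: "real^2" and \<sigma> :: "real^2^2"
  assumes "(v, m, \<sigma>, e) \<in> Zset"
    and "m \<noteq> (e + p) *\<^sub>R v"
    and "2 * e - (norm v)\<^sup>2 > 0"
    and "Mmat p (v, m, \<sigma>, e) = 0"
  shows "(v, m, \<sigma>, e) \<in> lam1 (Kset p)"
proof -
  define d where "d = m - (e + p) *\<^sub>R v"
  define \<mu> where "\<mu> = norm d"
  define \<eta> where "\<eta> = (1 / \<mu>) *\<^sub>R d"
  define r where "r = 2 * e - (norm v)\<^sup>2"
  have dne: "d \<noteq> 0" using assms(2) d_def by auto
  have mupos: "\<mu> > 0" using dne \<mu>_def by auto
  have rpos: "r > 0" using assms(3) r_def by auto
  have etaeq: "eta p (v, m, \<sigma>, e) = \<eta>" unfolding eta_def \<eta>_def \<mu>_def d_def by simp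
  have neta: "norm \<eta> = 1" using mupos unfolding \<eta>_def \<mu>_def by simp
  define h1 where "h1 = (\<eta>$1)"
  define h2 where "h2 = (\<eta>$2)"
  have hn: "h1^2 + h2^2 = 1" using neta norm2_comp[of \<eta>] h1_def h2_def by simp
  have mdec: "m = (e + p) *\<^sub>R v + \<mu> *\<^sub>R \<eta>" using mupos unfolding \<eta>_def d_def by simp
  have m1: "(m$1) = (e+p) * (v$1) + \<mu> * h1" using mdec h1_def by simp
  have m2: "(m$2) = (e+p) * (v$2) + \<mu> * h2" using mdec h2_def by simp
  have sdec: "\<sigma> = outer v v - e *\<^sub>R mat 1 + r *\<^sub>R outer \<eta> \<eta>"
    using assms(4) etaeq unfolding Mmat_def r_def by (simp add: algebra_simps)
  have s11: "(\<sigma>$1$1) = (v$1)*(v$1) - e + r*h1*h1" using sdec h1_def by (simp add: CS)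
  have s12: "(\<sigma>$1$2) = (v$1)*(v$2) + r*h1*h2" using sdec h1_def h2_def by (simp add: CS)
  have s21: "(\<sigma>$2$1) = (v$2)*(v$1) + r*h2*h1" using sdec h1_def h2_def by (simp add: CS)
  have s22: "(\<sigma>$2$2) = (v$2)*(v$2) - e + r*h2*h2" using sdec h2_def by (simp add: CS)
  have re: "r = 2*e - (v$1)^2 - (v$2)^2" using r_def norm2_comp[of v] by simp
  define w where "w = (v$1)*h1 + (v$2)*h2"
  define C where "C = 2 * (\<mu> - r * w)"
  define dd where "dd = C / r"
  define q where "q = sqrt (dd^2 + 4*r)"
  define a where "a = (dd + q) / 2"
  define b where "b = (q - dd) / 2"
  have qgt: "q > \<bar>dd\<bar>"
  proof -
    have "sqrt (dd^2) < sqrt (dd^2 + 4*r)" using rpos by (intro real_sqrt_less_mono) simp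
    then show ?thesis unfolding q_def by simp
  qed
  have apos: "a > 0" using qgt a_def by auto
  have bpos: "b > 0" using qgt b_def by auto
  have qsq: "q^2 = dd^2 + 4*r" using q_def rpos
    by (simp add: add_pos_nonneg)
  have ab: "a * b = r" unfolding a_def b_def using qsq by (simp add: algebra_simps power2_eq_square)
  have amb: "(a - b) * r = C" unfolding a_def b_def dd_def using rpos by (simp add: field_simps)
  define s where "s = b / (a + b)"
  have s01: "s \<in> {0..1}" using apos bpos s_def by auto
  define x1 where "x1 = v + a *\<^sub>R \<eta>"
  define x2 where "x2 = v - b *\<^sub>R \<eta>"
  define e1 where "e1 = ((x1$1)^2 + (x1$2)^2) / 2"
  define e2 where "e2 = ((x2$1)^2 + (x2$2)^2) / 2"
  define z1 where "z1 = (x1, (e1 + p) *\<^sub>R x1, outer x1 x1 - e1 *\<^sub>R mat 1, e1)"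
  define z2 where "z2 = (x2, (e2 + p) *\<^sub>R x2, outer x2 x2 - e2 *\<^sub>R mat 1, e2)"
  have x11: "(x1$1) = (v$1) + a*h1" and x12: "(x1$2) = (v$2) + a*h2"
    using x1_def h1_def h2_def by auto
  have x21: "(x2$1) = (v$1) - b*h1" and x22: "(x2$2) = (v$2) - b*h2"
    using x2_def h1_def h2_def by auto
  have z1K: "z1 \<in> Kset p"
    unfolding z1_def by (rule inK) (simp add: e1_def)
  have z2K: "z2 \<in> Kset p"
    unfolding z2_def by (rule inK) (simp add: e2_def)
  define VV where "VV = (v$1)^2 + (v$2)^2"
  have abp: "a + b > 0" using apos bpos by simp
  have sdef: "s = b/(a+b)" using s_def .
  have s1def: "1 - s = a/(a+b)" using abp unfolding s_def by (simp add: field_simps)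
  have ee: "e = (VV + a*b)/2" using re ab VV_def by simp
  have mu: "\<mu> = (a-b)*a*b/2 + a*b*w" using C_def amb ab by (simp add: algebra_simps)
  have sqexp: "\<And>t. (v$1 + t*h1)^2 + (v$2 + t*h2)^2 = VV + 2*t*w + t^2*(h1^2+h2^2)"
    unfolding VV_def w_def by (simp add: algebra_simps power2_eq_square)
  have E1: "e1 = (VV + 2*a*w + a^2)/2" using e1_def x11 x12 sqexp[of a] hn by simp
  have E2: "e2 = (VV - 2*b*w + b^2)/2" using e2_def x21 x22 sqexp[of "-b"] hn by simp
  have ce: "e = s * e1 + (1 - s) * e2"
    unfolding ee E1 E2 sdef by (rule alg_e[OF abp])
  have comb: "(v, m, \<sigma>, e) = s *\<^sub>R z1 + (1 - s) *\<^sub>R z2"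
  proof -
    have "v = s *\<^sub>R x1 + (1 - s) *\<^sub>R x2"
      using x11 x12 x21 x22 alg_v[OF abp] unfolding vec2_eq sdef by simp
    moreover have "m = s *\<^sub>R ((e1 + p) *\<^sub>R x1) + (1 - s) *\<^sub>R ((e2 + p) *\<^sub>R x2)"
      using x11 x12 x21 x22 alg_m[OF abp]
      unfolding vec2_eq m1 m2 ee E1 E2 sdef mu by simp
    moreover have "\<sigma> = s *\<^sub>R (outer x1 x1 - e1 *\<^sub>R mat 1) + (1 - s) *\<^sub>R (outer x2 x2 - e2 *\<^sub>R mat 1)"
    proof -
      have A: "\<And>x y h k. x*y + r*h*k = s * ((x + a*h)*(y+a*k)) + (1-s) * ((x - b*h)*(y-b*k))"
        unfolding sdef ab[symmetric] by (rule alg_s[OF abp])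
      have B: "\<And>x y h k. x*y - e + r*h*k = s * ((x + a*h)*(y+a*k) - e1) + (1-s) * ((x - b*h)*(y-b*k) - e2)"
        using A ce by (simp add: algebra_simps)
      show ?thesis using x11 x12 x21 x22 A B unfolding mat2_eq s11 s12 s21 s22 by (simp add: CS)
    qed
    ultimately show ?thesis using ce unfolding z1_def z2_def by simp
  qed
  define \<xi> :: "real^2" where "\<xi> = (\<chi> i. if i = 1 then - h2 else h1)"
  have xi1: "\<xi>$1 = - h2" and xi2: "\<xi>$2 = h1" unfolding \<xi>_def by auto
  define c where "c = - ((v$1) * (- h2) + (v$2) * h1)"
  have wc: "z1 - z2 \<in> wave_cone"
  proof -
    have Z: "z1 - z2 \<in> Zset"
      unfolding z1_def z2_def Zset_def by (simp add: CS mat2_eq e1_def e2_def power2_eq_square field_simps)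
    have nz: "(x1 - x2, e1 - e2) \<noteq> 0"
    proof
      assume "(x1 - x2, e1 - e2) = 0"
      then have "x1 - x2 = 0" by (simp add: zero_prod_def)
      then have "(a+b)*h1 = 0" "(a+b)*h2 = 0" using x11 x12 x21 x22 unfolding vec2_eq
        by (simp_all add: algebra_simps)
      then have "h1 = 0" "h2 = 0" using abp by auto
      then show False using hn by simp
    qed
    have xnz: "(\<xi>, c) \<noteq> 0"
    proof
      assume "(\<xi>, c) = 0"
      then have "\<xi> = 0" by (simp add: zero_prod_def)
      then have "h1 = 0" "h2 = 0" using xi1 xi2 unfolding vec2_eq by auto
      then show False using hn by simp
    qed
    have c1: "((outer x1 x1 - e1 *\<^sub>R mat 1) - (outer x2 x2 - e2 *\<^sub>R mat 1) + (e1 - e2) *\<^sub>R mat 1) *v \<xi>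
        + c *\<^sub>R (x1 - x2) = 0"
      unfolding vec2_eq
      by (simp add: CS c_def x11 x12 x21 x22 xi1 xi2 algebra_simps)
    have c2: "(x1 - x2) \<bullet> \<xi> = 0"
      by (simp add: CS x11 x12 x21 x22 xi1 xi2 algebra_simps)
    have c3: "((e1 + p) *\<^sub>R x1 - (e2 + p) *\<^sub>R x2) \<bullet> \<xi> + c * (e1 - e2) = 0"
      by (simp add: CS c_def x11 x12 x21 x22 xi1 xi2 algebra_simps)
    show ?thesis unfolding wave_cone_def
      using Z nz xnz c1 c2 c3 unfolding z1_def z2_def by fastforce
  qed
  show ?thesis unfolding lam1_def using z1K z2K s01 wc comb by blast
qed

end
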